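(* In the setting described in the context, for every edge $\mathfrak e\in\mathcal E$ and all $\bar{\vec p},\bar{\vec q},\bar{\vec v},\bar{\vec w}\in(\mathds P_p(\mathfrak e))^3$, \begin{align*} (\epsilon^{\vec u}_{\mathfrak e},\partial_x\bar{\vec p})_{\mathfrak e}&=(C_{\vec n}^{-1}(\vec n-\bar{\vec n}_{\mathfrak e}),\bar{\vec p})_{\mathfrak e}+(\vec i_{\mathfrak e}\times(\vec r-\bar{\vec r}_{\mathfrak e}),\bar{\vec p})_{\mathfrak e}+\langle\vec u-\bar{\vec u}_{\mathfrak n},\bar{\vec p}\,\nu_{\mathfrak e}\rangle_{\mathfrak e},\\ (\epsilon^{\vec r}_{\mathfrak e},\partial_x\bar{\vec q})_{\mathfrak e}&=(C_{\vec m}^{-1}(\vec m-\bar{\vec m}_{\mathfrak e}),\bar{\vec q})_{\mathfrak e}+\langle\vec r-\bar{\vec r}_{\mathfrak n},\bar{\vec q}\,\nu_{\mathfrak e}\rangle_{\mathfrak e},\\ (\partial_x\epsilon^{\vec n}_{\mathfrak e},\bar{\vec v})_{\mathfrak e}&=\langle\tau_{\mathfrak e}(\bar{\vec u}_{\mathfrak e}-\bar{\vec u}_{\mathfrak n})-\theta^{\vec n}_{\mathfrak e}\nu_{\mathfrak e},\bar{\vec v}\rangle_{\mathfrak e},\\ (\partial_x\epsilon^{\vec m}_{\mathfrak e},\bar{\vec w})_{\mathfrak e}&=\langle\tau_{\mathfrak e}(\bar{\vec r}_{\mathfrak e}-\bar{\vec r}_{\mathfrak n})-\theta^{\vec m}_{\mathfrak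 e}\nu_{\mathfrak e},\bar{\vec w}\rangle_{\mathfrak e}-(\vec i_{\mathfrak e}\times(\vec n-\bar{\vec n}_{\mathfrak e}),\bar{\vec w})_{\mathfrak e}. \end{align*} Furthermore, for every node $\mathfrak n\in\mathcal N\setminus\mathcal N_{\mathrm D}$ and all $\vec v_{\mathfrak n},\vec w_{\mathfrak n}\in\mathbb R^3$, \[ 0=[\![\epsilon^{\vec n}_{\mathfrak e}\nu_{\mathfrak e}+\tau_{\mathfrak e}\epsilon^{\vec u}_{\mathfrak e}-\tau_{\mathfrak e}(\vec u-\bar{\vec u}_{\mathfrak n})]\!]_{\mathfrak n}\cdot\vec v_{\mathfrak n}+[\![\epsilon^{\vec m}_{\mathfrak e}\nu_{\mathfrak e}+\tau_{\mathfrak e}\epsilon^{\vec r}_{\mathfrak e}-\tau_{\mathfrak e}(\vec r-\bar{\vec r}_{\mathfrak n})]\!]_{\mathfrak n}\cdot\vec w_{\mathfrak n}. \]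
   Context: Network: $\mathcal G=(\mathcal N,\mathcal E)$ finite connected graph embedded in $\mathbb R^3$; each edge $\mathfrak e$ is the straight segment between distinct nodes $\mathfrak n_k,\mathfrak n_\ell$ ($k<\ell$), with length $h_{\mathfrak e}$, direction $\vec i_{\mathfrak e}=(\mathfrak n_\ell-\mathfrak n_k)/h_{\mathfrak e}$, normals $\nu_{\mathfrak e}(\mathfrak n_k)=-1$, $\nu_{\mathfrak e}(\mathfrak n_\ell)=+1$; $x$ arclength on $\mathfrak e$ increasing along $\vec i_{\mathfrak e}$, $\partial_x$ its derivative, $\times$ cross product. $C_{\vec n},C_{\vec m}$ symmetric $\mathbb R^{3\times3}$-valued functions on edges with uniform bounds $\alpha|\xi|^2\le(C\xi)\cdot\xi\le\beta|\xi|^2$, $0<\alpha,\beta<\infty$. $(\vec a,\vec b)_{\mathfrak e}=\int_{\mathfrak e}\vec a\cdot\vec b\,\mathrm d\sigma$, $\langle\vec a,\vec b\rangle_{\mathfrak e}=\sum_{\mathfrak n\text{ endpoint of }\mathfrak e}\vec a(\mathfrak n)\cdot\vec b(\mathfrak n)$ (also for nodal quantities). For edge quantities, $[\![q_{\mathfrak e}]\!]_{\mathfrak n}=\sum_{\mathfrak e\text{ adjacent to }\mathfrak n}q_{\mathfrak e}(\mathfrak n)$. A nonempty set $\mathcal N_{\mathrm D}\subset\mathcal N$ of Dirichlet nodes is fixed. Data: $\vec f_{\mathfrak e},\vec g_{\mathfrak e}\in(L^2(\mathfrak e))^3$ per edge, $\vec f_{\mathfrak n},\vec g_{\mathfrak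 n}\in\mathbb R^3$ per free node, $\vec u^{\mathrm D}_{\mathfrak n},\vec r^{\mathrm D}_{\mathfrak n}\in\mathbb R^3$ per Dirichlet node. Exact solution: $\vec u_{\mathfrak e},\vec r_{\mathfrak e}\in(L^2(\mathfrak e))^3$, $\vec n_{\mathfrak e},\vec m_{\mathfrak e}\in(H^1(\mathfrak e))^3$ per edge and $\vec u_{\mathfrak n},\vec r_{\mathfrak n}\in\mathbb R^3$ per node (unique) with $\vec u_{\mathfrak n}=\vec u^{\mathrm D}_{\mathfrak n}$, $\vec r_{\mathfrak n}=\vec r^{\mathrm D}_{\mathfrak n}$ on $\mathcal N_{\mathrm D}$, $[\![\vec n_{\mathfrak e}\nu_{\mathfrak e}]\!]_{\mathfrak n}=\vec f_{\mathfrak n}$, $[\![\vec m_{\mathfrak e}\nu_{\mathfrak e}]\!]_{\mathfrak n}=\vec g_{\mathfrak n}$ on $\mathcal N\setminus\mathcal N_{\mathrm D}$, and on each edge, for all $\vec p,\vec q\in(H^1(\mathfrak e))^3$, $\vec v,\vec w\in(L^2(\mathfrak e))^3$: $-(C_{\vec n}^{-1}\vec n_{\mathfrak e},\vec p)_{\mathfrak e}+(\vec u_{\mathfrak e},\partial_x\vec p)_{\mathfrak e}-(\vec i_{\mathfrak e}\times\vec r_{\mathfrak e},\vec p)_{\mathfrak e}=\langle\vec u_{\mathfrak n},\vec p\nu_{\mathfrak e}\rangle_{\mathfrak e}$; $-(C_{\vec m}^{-1}\vec m_{\mathfrak e},\vec q)_{\mathfrak e}+(\vec r_{\mathfrak e},\partial_x\vec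 q)_{\mathfrak e}=\langle\vec r_{\mathfrak n},\vec q\nu_{\mathfrak e}\rangle_{\mathfrak e}$; $(\partial_x\vec n_{\mathfrak e},\vec v)_{\mathfrak e}=(\vec f_{\mathfrak e},\vec v)_{\mathfrak e}$; $(\vec i_{\mathfrak e}\times\vec n_{\mathfrak e},\vec w)_{\mathfrak e}+(\partial_x\vec m_{\mathfrak e},\vec w)_{\mathfrak e}=(\vec g_{\mathfrak e},\vec w)_{\mathfrak e}$. Then $\vec u_{\mathfrak e},\vec r_{\mathfrak e}\in(H^1(\mathfrak e))^3$ with $\vec u_{\mathfrak e}(\mathfrak n)=\vec u_{\mathfrak n}$, $\vec r_{\mathfrak e}(\mathfrak n)=\vec r_{\mathfrak n}$; subscripts are dropped, writing $\vec u,\vec r,\vec n,\vec m$. HDG solution: fix $p\in\mathbb N$, $\tau_{\mathfrak e}>0$ per edge, $V_p^{\mathfrak e}=(\mathds P_p(\mathfrak e))^3$. $\bar{\vec u}_{\mathfrak e},\bar{\vec r}_{\mathfrak e},\bar{\vec n}_{\mathfrak e},\bar{\vec m}_{\mathfrak e}\in V_p^{\mathfrak e}$ per edge and $\bar{\vec u}_{\mathfrak n},\bar{\vec r}_{\mathfrak n}\in\mathbb R^3$ per node with $\bar{\vec u}_{\mathfrak n}=\vec u^{\mathrm D}_{\mathfrak n}$, $\bar{\vec r}_{\mathfrak n}=\vec r^{\mathrm D}_{\mathfrak n}$ on $\mathcal N_{\mathrm D}$; $[\![\bar{\vec n}_{\mathfrak e}\nu_{\mathfrak e}+\tau_{\mathfrak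 e}(\bar{\vec u}_{\mathfrak e}-\bar{\vec u}_{\mathfrak n})]\!]_{\mathfrak n}=\vec f_{\mathfrak n}$ and $[\![\bar{\vec m}_{\mathfrak e}\nu_{\mathfrak e}+\tau_{\mathfrak e}(\bar{\vec r}_{\mathfrak e}-\bar{\vec r}_{\mathfrak n})]\!]_{\mathfrak n}=\vec g_{\mathfrak n}$ on $\mathcal N\setminus\mathcal N_{\mathrm D}$; and on each edge, for all $\bar{\vec p},\bar{\vec q},\bar{\vec v},\bar{\vec w}\in V_p^{\mathfrak e}$: $-(C_{\vec n}^{-1}\bar{\vec n}_{\mathfrak e},\bar{\vec p})_{\mathfrak e}+(\bar{\vec u}_{\mathfrak e},\partial_x\bar{\vec p})_{\mathfrak e}-(\vec i_{\mathfrak e}\times\bar{\vec r}_{\mathfrak e},\bar{\vec p})_{\mathfrak e}=\langle\bar{\vec u}_{\mathfrak n},\bar{\vec p}\nu_{\mathfrak e}\rangle_{\mathfrak e}$; $-(C_{\vec m}^{-1}\bar{\vec m}_{\mathfrak e},\bar{\vec q})_{\mathfrak e}+(\bar{\vec r}_{\mathfrak e},\partial_x\bar{\vec q})_{\mathfrak e}=\langle\bar{\vec r}_{\mathfrak n},\bar{\vec q}\nu_{\mathfrak e}\rangle_{\mathfrak e}$; $(\partial_x\bar{\vec n}_{\mathfrak e},\bar{\vec v})_{\mathfrak e}+\tau_{\mathfrak e}\langle\bar{\vec u}_{\mathfrak e},\bar{\vec v}\rangle_{\mathfrak e}=(\vec f_{\mathfrak e},\bar{\vec v})_{\mathfrak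 e}+\tau_{\mathfrak e}\langle\bar{\vec u}_{\mathfrak n},\bar{\vec v}\rangle_{\mathfrak e}$; $(\vec i_{\mathfrak e}\times\bar{\vec n}_{\mathfrak e},\bar{\vec w})_{\mathfrak e}+(\partial_x\bar{\vec m}_{\mathfrak e},\bar{\vec w})_{\mathfrak e}+\tau_{\mathfrak e}\langle\bar{\vec r}_{\mathfrak e},\bar{\vec w}\rangle_{\mathfrak e}=(\vec g_{\mathfrak e},\bar{\vec w})_{\mathfrak e}+\tau_{\mathfrak e}\langle\bar{\vec r}_{\mathfrak n},\bar{\vec w}\rangle_{\mathfrak e}$. Projection: for $\vec a,\vec b\in(H^1(\mathfrak e))^3$, $\Pi(\vec a,\vec b)=(\Pi_1(\vec a,\vec b),\Pi_2(\vec a,\vec b))\in V_p^{\mathfrak e}\times V_p^{\mathfrak e}$ is the (well-defined) pair with $(\Pi_1(\vec a,\vec b),\bar{\vec v})_{\mathfrak e}=(\vec a,\bar{\vec v})_{\mathfrak e}$ and $(\Pi_2(\vec a,\vec b),\bar{\vec v})_{\mathfrak e}=(\vec b,\bar{\vec v})_{\mathfrak e}$ for all $\bar{\vec v}\in(\mathds P_{p-1}(\mathfrak e))^3$, and $\Pi_2(\vec a,\vec b)(\mathfrak n)\nu_{\mathfrak e}(\mathfrak n)+\tau_{\mathfrak e}\Pi_1(\vec a,\vec b)(\mathfrak n)=\vec b(\mathfrak n)\nu_{\mathfrak e}(\mathfrak n)+\tau_{\mathfrak e}\vec a(\mathfrak n)$ at both endpoints $\mathfrak n$. Errors: $\theta^{\vec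 u}_{\mathfrak e}=\vec u_{\mathfrak e}-\Pi_1(\vec u_{\mathfrak e},\vec n_{\mathfrak e})$, $\epsilon^{\vec u}_{\mathfrak e}=\Pi_1(\vec u_{\mathfrak e},\vec n_{\mathfrak e})-\bar{\vec u}_{\mathfrak e}$, $\theta^{\vec n}_{\mathfrak e}=\vec n_{\mathfrak e}-\Pi_2(\vec u_{\mathfrak e},\vec n_{\mathfrak e})$, $\epsilon^{\vec n}_{\mathfrak e}=\Pi_2(\vec u_{\mathfrak e},\vec n_{\mathfrak e})-\bar{\vec n}_{\mathfrak e}$, and analogously $\theta^{\vec r}_{\mathfrak e}=\vec r_{\mathfrak e}-\Pi_1(\vec r_{\mathfrak e},\vec m_{\mathfrak e})$, $\epsilon^{\vec r}_{\mathfrak e}=\Pi_1(\vec r_{\mathfrak e},\vec m_{\mathfrak e})-\bar{\vec r}_{\mathfrak e}$, $\theta^{\vec m}_{\mathfrak e}=\vec m_{\mathfrak e}-\Pi_2(\vec r_{\mathfrak e},\vec m_{\mathfrak e})$, $\epsilon^{\vec m}_{\mathfrak e}=\Pi_2(\vec r_{\mathfrak e},\vec m_{\mathfrak e})-\bar{\vec m}_{\mathfrak e}$. *)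

theory Defs
  imports "HOL-Analysis.Analysis" "HOL-Computational_Algebra.Polynomial"
begin

type_synonym vec3 = "real^3"
type_synonym mat3 = "real^3^3"

text \<open>Each edge is parametrised by arclength x in [0, h], h its length; x = 0 is the
  tail node (normal -1), x = h is the head node (normal +1).\<close>

definition edge_len :: "('v \<Rightarrow> vec3) \<Rightarrow> ('e \<Rightarrow> 'v) \<Rightarrow> ('e \<Rightarrow> 'v) \<Rightarrow> 'e \<Rightarrow> real" where
  "edge_len pos src trg e = dist (pos (src e)) (pos (trg e))"

definition edge_dir :: "('v \<Rightarrow> vec3) \<Rightarrow> ('e \<Rightarrow> 'v) \<Rightarrow> ('e \<Rightarrow> 'v) \<Rightarrow> 'e \<Rightarrow> vec3" where
  "edge_dir pos src trg e = inverse (edge_len pos src trg e) *\<^sub>R (pos (trg e) - pos (src e))"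

definition ip :: "real \<Rightarrow> (real \<Rightarrow> vec3) \<Rightarrow> (real \<Rightarrow> vec3) \<Rightarrow> real" where
  "ip h a b = integral {0..h} (\<lambda>x. a x \<bullet> b x)"

definition L2 :: "real \<Rightarrow> (real \<Rightarrow> vec3) \<Rightarrow> bool" where
  "L2 h f \<longleftrightarrow> f measurable_on {0..h} \<and> (\<lambda>x. norm (f x) ^ 2) integrable_on {0..h}"

text \<open>g is the (weak) derivative of f in H1(0,h): f is the absolutely continuous
  representative, f(x) = f(0) + int_0^x g, with g in L2.\<close>
definition wderiv :: "real \<Rightarrow> (real \<Rightarrow> vec3) \<Rightarrow> (real \<Rightarrow> vec3) \<Rightarrow> bool" where
  "wderiv h f g \<longleftrightarrow> L2 h g \<and> (\<forall>x\<in>{0..h}. f x = f 0 + integral {0..x} g)"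

definition H1 :: "real \<Rightarrow> (real \<Rightarrow> vec3) \<Rightarrow> bool" where
  "H1 h f \<longleftrightarrow> (\<exists>g. wderiv h f g)"

definition polyvec :: "nat \<Rightarrow> (real \<Rightarrow> vec3) \<Rightarrow> bool" where
  "polyvec k f \<longleftrightarrow> (\<forall>i. \<exists>q :: real poly. degree q \<le> k \<and> (\<forall>x. f x $ i = poly q x))"

text \<open>(P_{p-1})^3, with the convention P_{-1} = {0}.\<close>
definition polyvec_m1 :: "nat \<Rightarrow> (real \<Rightarrow> vec3) \<Rightarrow> bool" where
  "polyvec_m1 p f \<longleftrightarrow> (if p = 0 then (\<forall>x. f x = 0) else polyvec (p - 1) f)"

definition dx :: "(real \<Rightarrow> vec3) \<Rightarrow> real \<Rightarrow> vec3" where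
  "dx f = (\<lambda>x. vector_derivative f (at x))"

text \<open>Edge boundary pairing <.,.>_e: q node x nu, summed over the two endpoints.\<close>
definition bdry :: "('e \<Rightarrow> 'v) \<Rightarrow> ('e \<Rightarrow> 'v) \<Rightarrow> real \<Rightarrow> ('v \<Rightarrow> real \<Rightarrow> real \<Rightarrow> real) \<Rightarrow> 'e \<Rightarrow> real" where
  "bdry src trg h q e = q (src e) 0 (-1) + q (trg e) h 1"

text \<open>Jump [[q_e]]_n = sum over edges adjacent to node n of q_e(n); q e x nu.\<close>
definition jump :: "'e set \<Rightarrow> ('e \<Rightarrow> 'v) \<Rightarrow> ('e \<Rightarrow> 'v) \<Rightarrow> ('e \<Rightarrow> real)
    \<Rightarrow> ('e \<Rightarrow> real \<Rightarrow> real \<Rightarrow> vec3) \<Rightarrow> 'v \<Rightarrow> vec3" where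
  "jump E src trg h q n = (\<Sum>e\<in>{e\<in>E. src e = n}. q e 0 (-1)) + (\<Sum>e\<in>{e\<in>E. trg e = n}. q e (h e) 1)"

definition is_proj :: "nat \<Rightarrow> real \<Rightarrow> real \<Rightarrow> (real \<Rightarrow> vec3) \<Rightarrow> (real \<Rightarrow> vec3)
    \<Rightarrow> (real \<Rightarrow> vec3) \<Rightarrow> (real \<Rightarrow> vec3) \<Rightarrow> bool" where
  "is_proj p tau h a b P1 P2 \<longleftrightarrow> polyvec p P1 \<and> polyvec p P2 \<and>
     (\<forall>v. polyvec_m1 p v \<longrightarrow> ip h P1 v = ip h a v \<and> ip h P2 v = ip h b v) \<and>
     (- P2 0) + tau *\<^sub>R P1 0 = (- b 0) + tau *\<^sub>R a 0 \<and>
     P2 h + tau *\<^sub>R P1 h = b h + tau *\<^sub>R a h"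

end

theory Submission
  imports Defs
begin


lemma ibp_borel:
  fixes b w w' :: "real \<Rightarrow> real"
  assumes h: "0 \<le> h" and bm[measurable]: "b \<in> borel_measurable borel"
    and bi: "set_integrable lborel {0..h} b"
    and wd: "\<And>x. (w has_real_derivative w' x) (at x)" and wc: "continuous_on UNIV w'"
  shows "(LBINT x. indicator {0..h} x * (w' x * (LBINT t. indicator {0..x} t * b t)))
        = (LBINT t. indicator {0..h} t * (b t * (w h - w t)))"
proof -
  have w'm[measurable]: "w' \<in> borel_measurable borel"
    using wc by (rule borel_measurable_continuous_onI)
  define F where "F x t = (if 0 \<le> x \<and> x \<le> h \<and> 0 \<le> t \<and> t \<le> x then b t * w' x else 0)" for x t
  have Fm: "(\<lambda>(x,t). F x t) \<in> borel_measurable (lborel \<Otimes>\<^sub>M lborel)"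
    unfolding F_def by measurable
  obtain C where C: "\<And>x. x \<in> {0..h} \<Longrightarrow> \<bar>w' x\<bar> \<le> C"
  proof -
    have "compact (w' ` {0..h})"
      by (intro compact_continuous_image continuous_on_subset[OF wc]) auto
    then obtain C where "\<forall>y\<in>w' ` {0..h}. norm y \<le> C"
      using compact_imp_bounded bounded_iff by blast
    then show ?thesis by (intro that) auto
  qed
  have bi': "integrable lborel (\<lambda>t. indicator {0..h} t * b t)"
    using bi by (simp add: set_integrable_def)
  have bix: "integrable lborel (\<lambda>t. indicator {0..x} t * b t)" if "x \<le> h" for x
  proof -
    have "set_integrable lborel {0..x} b"
      by (rule set_integrable_subset[OF bi]) (use that in auto)
    then show ?thesis by (simp add: set_integrable_def)
  qed
  have absi: "integrable lborel (\<lambda>t. indicator {0..h} t * \<bar>b t\<bar>)"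
    using integrable_abs[OF bi'] by (simp add: abs_mult)
  define K where "K = (LBINT t. indicator {0..h} t * \<bar>b t\<bar>)"
  have inner_x: "(\<lambda>t. F x t) = (\<lambda>t. indicator {0..h} x * (w' x * (indicator {0..x} t * b t)))" for x
    by (rule ext) (auto simp: F_def indicator_def)
  have inner_t: "(\<lambda>x. F x t) = (\<lambda>x. indicator {0..h} t * (b t * (w' x * indicator {t..h} x)))" for t
    by (rule ext) (auto simp: F_def indicator_def)
  have intx: "integrable lborel (\<lambda>t. F x t)" for x
  proof (cases "x \<le> h")
    case True
    then show ?thesis unfolding inner_x by (intro integrable_mult_right bix)
  next
    case False
    then show ?thesis unfolding inner_x by (simp add: indicator_def)
  qed
  have integ: "integrable (lborel \<Otimes>\<^sub>M lborel) (\<lambda>(x,t). F x t)"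
  proof (rule lborel_pair.Fubini_integrable[OF Fm])
    show "AE x in lborel. integrable lborel (\<lambda>y. case (x, y) of (x, t) \<Rightarrow> F x t)"
      using intx by simp
    show "integrable lborel (\<lambda>x. LINT y|lborel. norm (case (x, y) of (x, t) \<Rightarrow> F x t))"
    proof (rule integrableI_bounded_set[where A="{0..h}" and B="C * K"])
      show "(\<lambda>x. LINT y|lborel. norm (case (x, y) of (x, t) \<Rightarrow> F x t)) \<in> borel_measurable lborel"
        using Fm by measurable
      show "AE x in lborel. x \<notin> {0..h} \<longrightarrow> (LINT y|lborel. norm (case (x, y) of (x, t) \<Rightarrow> F x t)) = 0"
        by (auto simp: F_def)
      show "AE x\<in>{0..h} in lborel. norm (LINT y|lborel. norm (case (x, y) of (x, t) \<Rightarrow> F x t)) \<le> C * K"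
      proof (intro AE_I2 impI)
        fix x :: real assume x: "x \<in> {0..h}"
        have "(LINT y|lborel. norm (case (x, y) of (x, t) \<Rightarrow> F x t))
            = \<bar>w' x\<bar> * (LBINT t. indicator {0..x} t * \<bar>b t\<bar>)"
          using x by (simp add: inner_x abs_mult)
        also have "\<dots> \<le> C * K"
        proof (rule mult_mono)
          show "\<bar>w' x\<bar> \<le> C" using C x .
          show "(LBINT t. indicator {0..x} t * \<bar>b t\<bar>) \<le> K"
            unfolding K_def
          proof (rule integral_mono)
            show "integrable lborel (\<lambda>t. indicator {0..x} t * \<bar>b t\<bar>)"
              using integrable_abs[OF bix[of x]] x by (simp add: abs_mult)
          qed (use absi x in \<open>auto simp: indicator_def\<close>)
          show "0 \<le> C" using C[of 0] h by auto
          show "0 \<le> (LBINT t. indicator {0..x} t * \<bar>b t\<bar>)"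
            by (rule integral_nonneg_AE) auto
        qed
        finally show "norm (LINT y|lborel. norm (case (x, y) of (x, t) \<Rightarrow> F x t)) \<le> C * K"
          by simp
      qed
    qed (use h in auto)
  qed
  have "(LBINT t. (LBINT x. F x t)) = (LBINT x. (LBINT t. F x t))"
    using lborel_pair.Fubini_integral[of F] integ by simp
  moreover have "(LBINT x. F x t) = indicator {0..h} t * (b t * (w h - w t))" for t
  proof (cases "0 \<le> t \<and> t \<le> h")
    case True
    have "(LBINT x. w' x * indicator {t..h} x) = w h - w t"
      by (rule integral_FTC_Icc_real) (use True wd wc in \<open>auto simp: continuous_on_eq_continuous_at\<close>)
    then show ?thesis unfolding inner_t using True by simp
  next
    case False
    then show ?thesis unfolding inner_t by (simp add: indicator_def)
  qed
  moreover have "(LBINT t. F x t) = indicator {0..h} x * (w' x * (LBINT t. indicator {0..x} t * b t))" for x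
    unfolding inner_x by simp
  ultimately show ?thesis by simp
qed

lemma set_integrable_mult_cont:
  fixes b c :: "real \<Rightarrow> real"
  assumes bi: "set_integrable lborel {0..h} b" and bm: "b \<in> borel_measurable borel"
    and c: "continuous_on UNIV c"
  shows "set_integrable lborel {0..h} (\<lambda>t. b t * c t)"
proof -
  obtain D where D: "\<And>x. x \<in> {0..h} \<Longrightarrow> \<bar>c x\<bar> \<le> D"
  proof -
    have "compact (c ` {0..h})"
      by (intro compact_continuous_image continuous_on_subset[OF c]) auto
    then obtain D where "\<forall>y\<in>c ` {0..h}. norm y \<le> D"
      using compact_imp_bounded bounded_iff by blast
    then show ?thesis by (intro that) auto
  qed
  have cm: "c \<in> borel_measurable borel"
    using c by (rule borel_measurable_continuous_onI)
  have bi': "integrable lborel (\<lambda>t. indicator {0..h} t * b t)"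
    using bi by (simp add: set_integrable_def)
  show ?thesis
    unfolding set_integrable_def
  proof (rule Bochner_Integration.integrable_bound[OF integrable_mult_right[OF bi', of D]])
    show "(\<lambda>x. indicat_real {0..h} x *\<^sub>R (b x * c x)) \<in> borel_measurable lborel"
      using bm cm by measurable
    show "AE x in lborel. norm (indicat_real {0..h} x *\<^sub>R (b x * c x)) \<le> norm (D * (indicat_real {0..h} x * b x))"
    proof (intro AE_I2)
      fix x :: real
      show "norm (indicat_real {0..h} x *\<^sub>R (b x * c x)) \<le> norm (D * (indicat_real {0..h} x * b x))"
      proof (cases "x \<in> {0..h}")
        case True
        then have "\<bar>b x\<bar> * \<bar>c x\<bar> \<le> \<bar>b x\<bar> * \<bar>D\<bar>"
          using D[OF True] by (intro mult_left_mono) auto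
        then show ?thesis using True by (simp add: abs_mult mult.commute)
      qed simp
    qed
  qed
qed

lemma ibp_scalar:
  fixes g w w' F :: "real \<Rightarrow> real"
  assumes h: "0 \<le> h" and g: "g absolutely_integrable_on {0..h}"
    and Fg: "\<And>x. x \<in> {0..h} \<Longrightarrow> F x = F 0 + integral {0..x} g"
    and wd: "\<And>x. (w has_real_derivative w' x) (at x)" and wc: "continuous_on UNIV w'"
  shows "integral {0..h} (\<lambda>x. g x * w x) = F h * w h - F 0 * w 0 - integral {0..h} (\<lambda>x. F x * w' x)"
proof -
  have "integrable lebesgue (\<lambda>t. indicator {0..h} t *\<^sub>R g t)"
    using g by (simp add: set_integrable_def)
  then have "(\<lambda>t. indicator {0..h} t *\<^sub>R g t) \<in> borel_measurable (completion lborel)"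
    by (rule borel_measurable_integrable)
  then obtain b0 where b0m: "b0 \<in> borel_measurable lborel"
    and b0: "AE t in lborel. indicator {0..h} t *\<^sub>R g t = b0 t"
    using completion_ex_borel_measurable_real by blast
  obtain N where N: "{t \<in> space lborel. \<not> (indicator {0..h} t *\<^sub>R g t = b0 t)} \<subseteq> N"
    and Nnull: "N \<in> null_sets lborel"
    using AE_E[OF b0] by (metis null_setsI)
  have negN: "negligible N"
    using Nnull by (simp add: negligible_iff_null_sets null_sets_completionI)
  define b where "b t = indicator {0..h} t * b0 t" for t
  have bm[measurable]: "b \<in> borel_measurable borel"
    using b0m unfolding b_def by simp
  have eq: "g t = b t" if "t \<in> {0..h} - N" for t
  proof -
    have "t \<notin> {t \<in> space lborel. \<not> (indicator {0..h} t *\<^sub>R g t = b0 t)}" using that N by blast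
    then have "indicator {0..h} t *\<^sub>R g t = b0 t" by simp
    then show ?thesis using that by (simp add: b_def)
  qed
  have ba: "b absolutely_integrable_on {0..h}"
    by (rule absolutely_integrable_spike[OF g negN]) (use eq in auto)
  have bi: "set_integrable lborel {0..h} b"
    using ba bm by (simp add: set_integrable_def integrable_completion)
  have gint: "g integrable_on {0..h}"
    using g set_lebesgue_integral_eq_integral(1) by blast
  have bix: "set_integrable lborel {0..x} b" if "x \<le> h" for x
    by (rule set_integrable_subset[OF bi]) (use that in auto)
  have Ix: "(LBINT t. indicator {0..x} t * b t) = integral {0..x} g" if x: "x \<in> {0..h}" for x
  proof -
    have "(LBINT t. indicator {0..x} t * b t) = integral {0..x} b"
      using set_borel_integral_eq_integral(2)[OF bix[of x]] x
      by (simp add: set_lebesgue_integral_def)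
    also have "\<dots> = integral {0..x} g"
      by (rule integral_spike[OF negN]) (use eq x in auto)
    finally show ?thesis .
  qed
  have Gc: "continuous_on {0..h} (\<lambda>x. integral {0..x} g)"
    by (rule indefinite_integral_continuous_1[OF gint])
  have w'c: "continuous_on {0..h} w'"
    using wc continuous_on_subset by blast
  have "(LBINT x. indicator {0..h} x * (w' x * (LBINT t. indicator {0..x} t * b t)))
      = (LBINT x. indicator {0..h} x * (w' x * integral {0..x} g))"
  proof (rule Bochner_Integration.integral_cong)
    fix x :: real
    show "indicator {0..h} x * (w' x * (LBINT t. indicator {0..x} t * b t)) =
          indicator {0..h} x * (w' x * integral {0..x} g)"
    proof (cases "x \<in> {0..h}")
      case True
      then show ?thesis by (simp only: Ix)
    next
      case False
      then show ?thesis by simp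
    qed
  qed simp
  also have "\<dots> = integral {0..h} (\<lambda>x. w' x * integral {0..x} g)"
  proof -
    have "set_integrable lborel {0..h} (\<lambda>x. w' x * integral {0..x} g)"
      unfolding set_integrable_def
      by (rule borel_integrable_compact) (auto intro!: continuous_on_mult Gc w'c)
    from set_borel_integral_eq_integral(2)[OF this] show ?thesis
      by (simp add: set_lebesgue_integral_def)
  qed
  finally have L: "(LBINT x. indicator {0..h} x * (w' x * (LBINT t. indicator {0..x} t * b t)))
      = integral {0..h} (\<lambda>x. w' x * integral {0..x} g)" .
  have wcont: "continuous_on UNIV w"
    using wd by (meson DERIV_isCont continuous_at_imp_continuous_on)
  have bw: "set_integrable lborel {0..h} (\<lambda>t. b t * (w h - w t))"
    by (rule set_integrable_mult_cont[OF bi bm]) (auto intro!: continuous_intros wcont)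
  have bw2: "set_integrable lborel {0..h} (\<lambda>t. b t * w t)"
    by (rule set_integrable_mult_cont[OF bi bm wcont])
  have "(LBINT t. indicator {0..h} t * (b t * (w h - w t))) = integral {0..h} (\<lambda>t. b t * (w h - w t))"
    using set_borel_integral_eq_integral(2)[OF bw] by (simp add: set_lebesgue_integral_def)
  also have "\<dots> = integral {0..h} (\<lambda>t. b t * w h - b t * w t)"
    by (simp add: algebra_simps)
  also have "\<dots> = integral {0..h} b * w h - integral {0..h} (\<lambda>t. b t * w t)"
    using set_borel_integral_eq_integral(1)[OF bi] set_borel_integral_eq_integral(1)[OF bw2]
    by (simp add: integral_diff integrable_on_mult_left)
  also have "\<dots> = integral {0..h} g * w h - integral {0..h} (\<lambda>t. g t * w t)"
  proof -
    have "integral {0..h} b = integral {0..h} g"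
      by (rule integral_spike[OF negN]) (use eq in auto)
    moreover have "integral {0..h} (\<lambda>t. b t * w t) = integral {0..h} (\<lambda>t. g t * w t)"
      by (rule integral_spike[OF negN]) (use eq in auto)
    ultimately show ?thesis by simp
  qed
  finally have R: "(LBINT t. indicator {0..h} t * (b t * (w h - w t)))
     = integral {0..h} g * w h - integral {0..h} (\<lambda>t. g t * w t)" .
  have main: "integral {0..h} (\<lambda>x. w' x * integral {0..x} g) = integral {0..h} g * w h - integral {0..h} (\<lambda>t. g t * w t)"
    using ibp_borel[OF h _ bi wd wc] L R by simp
  have FTC: "integral {0..h} w' = w h - w 0"
  proof (rule integral_unique, rule fundamental_theorem_of_calculus[OF h])
    show "\<And>x. x \<in> {0..h} \<Longrightarrow> (w has_vector_derivative w' x) (at x within {0..h})"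
      using wd has_field_derivative_at_within has_real_derivative_iff_has_vector_derivative by blast
  qed
  have "integral {0..h} (\<lambda>x. F x * w' x) = integral {0..h} (\<lambda>x. F 0 * w' x + w' x * integral {0..x} g)"
  proof (rule integral_cong)
    fix x assume "x \<in> {0..h}"
    from Fg[OF this] show "F x * w' x = F 0 * w' x + w' x * integral {0..x} g"
      by (simp add: algebra_simps)
  qed
  also have "\<dots> = F 0 * integral {0..h} w' + integral {0..h} (\<lambda>x. w' x * integral {0..x} g)"
    by (subst integral_add) (auto intro!: integrable_continuous_interval continuous_on_mult Gc w'c)
  finally have "integral {0..h} (\<lambda>x. F x * w' x) = F 0 * (w h - w 0) + (integral {0..h} g * w h - integral {0..h} (\<lambda>t. g t * w t))"
    using FTC main by simp
  moreover have "F h = F 0 + integral {0..h} g" using Fg[of h] h by simp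
  ultimately show ?thesis by (simp add: algebra_simps)
qed


lemma le_one_plus_sq: "(x::real) \<le> 1 + x^2"
proof -
  have "0 \<le> (x - 1/2)^2" by simp
  then show ?thesis by (simp add: power2_eq_square algebra_simps)
qed

lemma L2_abs:
  assumes "L2 h g"
  shows "g absolutely_integrable_on {0..h}"
proof (rule measurable_bounded_by_integrable_imp_absolutely_integrable)
  show "g \<in> borel_measurable (lebesgue_on {0..h})"
    using assms by (simp add: L2_def measurable_on_iff_borel_measurable)
  show "(\<lambda>x. 1 + norm (g x) ^ 2) integrable_on {0..h}"
    using assms by (intro integrable_add) (auto simp: L2_def)
  show "norm (g x) \<le> 1 + norm (g x) ^ 2" for x
    by (rule le_one_plus_sq)
qed auto

lemma wderiv_cont:
  assumes "wderiv h f g"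
  shows "continuous_on {0..h} f"
proof -
  have gi: "g integrable_on {0..h}"
    using L2_abs assms unfolding wderiv_def
    using set_lebesgue_integral_eq_integral(1) by blast
  have "continuous_on {0..h} (\<lambda>x. f 0 + integral {0..x} g)"
    by (intro continuous_intros indefinite_integral_continuous_1 gi)
  then show ?thesis
    using assms unfolding wderiv_def by (metis (no_types, lifting) continuous_on_cong)
qed

lemma vec_nth_vector_derivative:
  assumes "(w has_vector_derivative w') (at x)"
  shows "((\<lambda>x. w x $ i) has_real_derivative (w' $ i)) (at x)"
proof -
  have "(w has_derivative (\<lambda>t. t *\<^sub>R w')) (at x)"
    using assms by (simp add: has_vector_derivative_def)
  from bounded_linear.has_derivative[OF bounded_linear_vec_nth this, of i]
  have "((\<lambda>x. w x $ i) has_derivative (\<lambda>t. t *\<^sub>R (w' $ i))) (at x)"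
    by simp
  then show ?thesis
    by (simp add: has_real_derivative_iff_has_vector_derivative has_vector_derivative_def)
qed

lemma bounded_on_interval:
  fixes c :: "real \<Rightarrow> 'a::real_normed_vector"
  assumes "continuous_on {a..b} c"
  shows "bounded (c ` {a..b})"
  by (intro compact_imp_bounded compact_continuous_image assms) auto

lemma ibp_vec:
  assumes h: "0 \<le> h" and fg: "wderiv h f g"
    and wd: "\<And>x. (w has_vector_derivative w' x) (at x)" and wc: "continuous_on UNIV w'"
  shows "ip h g w = f h \<bullet> w h - f 0 \<bullet> w 0 - ip h f w'"
proof -
  have ga: "g absolutely_integrable_on {0..h}"
    using L2_abs fg unfolding wderiv_def by blast
  have gi: "g integrable_on {0..h}"
    using ga set_lebesgue_integral_eq_integral(1) by blast
  have fc: "continuous_on {0..h} f" by (rule wderiv_cont[OF fg])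
  have wcont: "continuous_on UNIV w"
    using wd by (meson has_vector_derivative_continuous continuous_at_imp_continuous_on)
  have comp: "integral {0..h} (\<lambda>x. g x $ i * w x $ i)
      = f h $ i * w h $ i - f 0 $ i * w 0 $ i - integral {0..h} (\<lambda>x. f x $ i * w' x $ i)" for i
  proof (rule ibp_scalar[OF h])
    show "(\<lambda>x. g x $ i) absolutely_integrable_on {0..h}"
      using absolutely_integrable_component[OF ga, of "axis i 1"] by (simp add: inner_axis)
    show "f x $ i = f 0 $ i + integral {0..x} (\<lambda>x. g x $ i)" if "x \<in> {0..h}" for x
    proof -
      have "g integrable_on {0..x}"
        by (rule integrable_on_subinterval[OF gi]) (use that in auto)
      moreover have "f x = f 0 + integral {0..x} g"
        using fg that unfolding wderiv_def by blast
      ultimately show ?thesis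
        by (simp add: integral_component_eq_cart)
    qed
    show "((\<lambda>x. w x $ i) has_real_derivative w' x $ i) (at x)" for x
      by (rule vec_nth_vector_derivative[OF wd])
    show "continuous_on UNIV (\<lambda>x. w' x $ i)"
      by (intro continuous_intros wc)
  qed
  have int1: "(\<lambda>x. g x $ i * w x $ i) integrable_on {0..h}" for i
  proof -
    have "(\<lambda>x. w x $ i * g x $ i) absolutely_integrable_on {0..h}"
    proof (rule absolutely_integrable_bounded_measurable_product_real)
      show "(\<lambda>x. w x $ i) \<in> borel_measurable (lebesgue_on {0..h})"
        by (intro continuous_imp_measurable_on_sets_lebesgue continuous_intros continuous_on_subset[OF wcont]) auto
      show "bounded ((\<lambda>x. w x $ i) ` {0..h})"
        by (intro bounded_on_interval continuous_intros continuous_on_subset[OF wcont]) auto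
      show "(\<lambda>x. g x $ i) absolutely_integrable_on {0..h}"
        using absolutely_integrable_component[OF ga, of "axis i 1"] by (simp add: inner_axis)
    qed auto
    then show ?thesis
      using set_lebesgue_integral_eq_integral(1) by (simp add: mult.commute)
  qed
  have int2: "(\<lambda>x. f x $ i * w' x $ i) integrable_on {0..h}" for i
    by (intro integrable_continuous_interval continuous_intros fc continuous_on_subset[OF wc]) auto
  have "ip h g w = (\<Sum>i\<in>UNIV. integral {0..h} (\<lambda>x. g x $ i * w x $ i))"
    unfolding ip_def inner_vec_def inner_real_def by (rule integral_sum) (use int1 in auto)
  also have "\<dots> = (\<Sum>i\<in>UNIV. f h $ i * w h $ i - f 0 $ i * w 0 $ i - integral {0..h} (\<lambda>x. f x $ i * w' x $ i))"
    using comp by simp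
  also have "\<dots> = f h \<bullet> w h - f 0 \<bullet> w 0 - (\<Sum>i\<in>UNIV. integral {0..h} (\<lambda>x. f x $ i * w' x $ i))"
    by (simp add: inner_vec_def sum_subtractf)
  also have "(\<Sum>i\<in>UNIV. integral {0..h} (\<lambda>x. f x $ i * w' x $ i)) = ip h f w'"
    unfolding ip_def inner_vec_def inner_real_def by (rule integral_sum[symmetric]) (use int2 in auto)
  finally show ?thesis .
qed



lemma polyvec_obtain:
  assumes "polyvec k f"
  obtains q where "\<And>i. degree (q i) \<le> k" "\<And>i x. f x $ i = poly (q i) x"
proof -
  from assms have "\<forall>i. \<exists>q :: real poly. degree q \<le> k \<and> (\<forall>x. f x $ i = poly q x)"
    by (simp add: polyvec_def)
  then obtain q where "\<forall>i. degree (q i) \<le> k \<and> (\<forall>x. f x $ i = poly (q i) x)"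
    by metis
  then show ?thesis using that by blast
qed

lemma vec_has_vector_derivative:
  fixes f :: "real \<Rightarrow> real^'n"
  assumes "\<And>i. ((\<lambda>x. f x $ i) has_real_derivative D $ i) (at x)"
  shows "(f has_vector_derivative D) (at x)"
  unfolding has_vector_derivative_def
proof (subst has_derivative_componentwise_within, intro ballI)
  fix b :: "real^'n" assume "b \<in> Basis"
  then obtain i where b: "b = axis i 1" by (auto simp: Basis_vec_def)
  have "((\<lambda>x. f x $ i) has_derivative (\<lambda>t. t * D $ i)) (at x)"
  proof -
    have "(\<lambda>t. t * D $ i) = (*) (D $ i)" by (auto simp: mult.commute)
    then show ?thesis using assms[of i] by (simp add: has_field_derivative_def)
  qed
  then show "((\<lambda>x. f x \<bullet> b) has_derivative (\<lambda>t. t *\<^sub>R D \<bullet> b)) (at x)"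
    by (simp add: b inner_axis)
qed

lemma polyvec_deriv:
  assumes "polyvec k f"
  shows "\<And>x. (f has_vector_derivative dx f x) (at x)"
    and "polyvec_m1 k (dx f)" and "continuous_on UNIV (dx f)" and "continuous_on UNIV f"
proof -
  obtain q where dq: "\<And>i. degree (q i) \<le> k" and fq: "\<And>i x. f x $ i = poly (q i) x"
    using polyvec_obtain[OF assms] by blast
  define D where "D x = (\<chi> i. poly (pderiv (q i)) x)" for x
  have der: "(f has_vector_derivative D x) (at x)" for x
    by (rule vec_has_vector_derivative) (simp add: D_def fq poly_DERIV)
  then have dxD: "dx f = D"
    by (auto simp: dx_def vector_derivative_at)
  show "(f has_vector_derivative dx f x) (at x)" for x
    using der dxD by simp
  show "continuous_on UNIV f"
    using der by (meson has_vector_derivative_continuous continuous_at_imp_continuous_on)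
  show "continuous_on UNIV (dx f)"
    unfolding dxD D_def by (intro continuous_on_vec_lambda continuous_intros)
  show "polyvec_m1 k (dx f)"
  proof (cases "k = 0")
    case True
    then have "pderiv (q i) = 0" for i using dq[of i] by (simp add: pderiv_eq_0_iff)
    then show ?thesis using True by (simp add: polyvec_m1_def dxD D_def vec_eq_iff)
  next
    case False
    have "degree (pderiv (q i)) \<le> k - 1" for i
      using dq[of i] by (simp add: degree_pderiv)
    then show ?thesis using False unfolding polyvec_m1_def polyvec_def dxD D_def by auto
  qed
qed

lemma cont_L2:
  assumes "continuous_on {0..h} f"
  shows "L2 h f"
  unfolding L2_def
proof
  show "f measurable_on {0..h}"
    using assms by (simp add: measurable_on_iff_borel_measurable continuous_imp_measurable_on_sets_lebesgue)
  show "(\<lambda>x. (norm (f x))\<^sup>2) integrable_on {0..h}"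
    by (intro integrable_continuous_interval continuous_intros assms)
qed

lemma polyvec_wderiv:
  assumes "polyvec k P" "0 \<le> h"
  shows "wderiv h P (dx P)"
  unfolding wderiv_def
proof
  show "L2 h (dx P)"
    using polyvec_deriv(3)[OF assms(1)] by (intro cont_L2) (auto intro: continuous_on_subset)
  show "\<forall>x\<in>{0..h}. P x = P 0 + integral {0..x} (dx P)"
  proof
    fix x assume x: "x \<in> {0..h}"
    have "(dx P has_integral P x - P 0) {0..x}"
      by (rule fundamental_theorem_of_calculus)
         (use x polyvec_deriv(1)[OF assms(1)] in \<open>auto intro: has_vector_derivative_at_within\<close>)
    then show "P x = P 0 + integral {0..x} (dx P)"
      by (simp add: integral_unique)
  qed
qed



lemma posdef_props:
  fixes A :: "real^'n^'n"
  assumes a: "0 < \<alpha>" and bd: "\<And>\<xi>. \<alpha> * norm \<xi> ^ 2 \<le> (A *v \<xi>) \<bullet> \<xi>"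
  shows "invertible A" "det A \<noteq> 0" "A *v (matrix_inv A *v v) = v"
    "norm (matrix_inv A *v v) \<le> norm v / \<alpha>"
proof -
  have inj: "inj ((*v) A)"
  proof (rule injI)
    fix x y assume "A *v x = A *v y"
    then have "A *v (x - y) = 0" by (simp add: matrix_vector_mult_diff_distrib)
    then have "\<alpha> * norm (x - y) ^ 2 \<le> 0" using bd[of "x - y"] by simp
    then have "norm (x - y) = 0" using a
      by (metis mult_pos_pos norm_ge_zero not_le order_antisym_conv zero_less_power2 power2_eq_square mult_le_0_iff)
    then show "x = y" by simp
  qed
  then obtain B where B: "B ** A = mat 1"
    using matrix_left_invertible_injective by blast
  then have "A ** B = mat 1" using matrix_left_right_inverse by blast
  with B show inv: "invertible A" unfolding invertible_def by blast
  then show "det A \<noteq> 0" by (simp add: invertible_det_nz)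
  have "A ** matrix_inv A = mat 1"
    using inv unfolding invertible_def matrix_inv_def by (rule someI_ex[THEN conjunct1])
  then show eq: "A *v (matrix_inv A *v v) = v"
    by (metis matrix_vector_mul_assoc matrix_vector_mul_lid)
  define z where "z = matrix_inv A *v v"
  have "\<alpha> * norm z ^ 2 \<le> v \<bullet> z" using bd[of z] eq by (simp add: z_def)
  also have "\<dots> \<le> norm v * norm z" by (rule norm_cauchy_schwarz)
  finally have *: "\<alpha> * norm z ^ 2 \<le> norm v * norm z" .
  show "norm z \<le> norm v / \<alpha>"
  proof (cases "norm z = 0")
    case True then show ?thesis using a by simp
  next
    case False
    then have "0 < norm z" by simp
    with * have "\<alpha> * norm z \<le> norm v" by (simp add: power2_eq_square)
    then show ?thesis using a by (simp add: field_simps)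
  qed
qed

lemma matrix_inv_cramer:
  fixes A :: "real^'n^'n"
  assumes "det A \<noteq> 0" "A *v (matrix_inv A *v v) = v"
  shows "matrix_inv A *v v = (\<chi> k. det(\<chi> i j. if j=k then v$i else A$i$j) / det A)"
  using cramer[OF assms(1)] assms(2) by blast

lemma continuous_on_if_const[continuous_intros]:
  "continuous_on S f \<Longrightarrow> continuous_on S g \<Longrightarrow> continuous_on S (\<lambda>x. if c then f x else g x)"
  by (cases c) auto

lemma det_cont: "continuous_on UNIV (\<lambda>p::(real^'n^'n) \<times> (real^'n). det(\<chi> i j. if j=k then snd p$i else fst p$i$j))"
  unfolding det_def by simp (intro continuous_intros)

lemma det_cont0: "continuous_on UNIV (\<lambda>A::real^'n^'n. det A)"
  unfolding det_def by (intro continuous_intros)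

lemma inv_integrable:
  fixes C :: "real \<Rightarrow> real^'n^'n" and y P :: "real \<Rightarrow> real^'n"
  assumes Cm: "C measurable_on {0..h}" and a: "0 < \<alpha>"
    and Cbd: "\<And>x \<xi>. x \<in> {0..h} \<Longrightarrow> \<alpha> * norm \<xi> ^ 2 \<le> (C x *v \<xi>) \<bullet> \<xi>"
    and y: "continuous_on {0..h} y" and P: "continuous_on {0..h} P"
  shows "(\<lambda>x. (matrix_inv (C x) *v y x) \<bullet> P x) integrable_on {0..h}"
proof -
  let ?S = "{0..h::real}"
  have S: "?S \<in> sets lebesgue" by simp
  have Cb[measurable]: "C \<in> borel_measurable (lebesgue_on ?S)"
    using Cm S by (simp add: measurable_on_iff_borel_measurable)
  have yb[measurable]: "y \<in> borel_measurable (lebesgue_on ?S)"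
    using y S by (rule continuous_imp_measurable_on_sets_lebesgue)
  have Pb[measurable]: "(\<lambda>x. P x $ k) \<in> borel_measurable (lebesgue_on ?S)" for k
    using S by (intro continuous_imp_measurable_on_sets_lebesgue continuous_intros P)
  define N where "N k x = det(\<chi> i j. if j=k then y x$i else C x$i$j)" for k x
  define d where "d x = det (C x)" for x
  have Nb[measurable]: "N k \<in> borel_measurable (lebesgue_on ?S)" for k
    unfolding N_def
    using borel_measurable_continuous_Pair[OF Cb yb, of "\<lambda>A v. det(\<chi> i j. if j=k then v$i else A$i$j)"]
      det_cont[of k] by simp
  have db[measurable]: "d \<in> borel_measurable (lebesgue_on ?S)"
    unfolding d_def by (rule borel_measurable_continuous_on[OF det_cont0 Cb])
  have eqS: "(matrix_inv (C x) *v y x) \<bullet> P x = (\<Sum>k\<in>UNIV. N k x / d x * P x $ k)" if x: "x \<in> ?S" for x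
  proof -
    have "matrix_inv (C x) *v y x = (\<chi> k. N k x / d x)"
      unfolding N_def d_def
      by (rule matrix_inv_cramer) (use posdef_props[OF a Cbd[OF x]] in auto)
    then show ?thesis by (simp add: inner_vec_def)
  qed
  have mb: "(\<lambda>x. (matrix_inv (C x) *v y x) \<bullet> P x) \<in> borel_measurable (lebesgue_on ?S)"
  proof (subst measurable_cong)
    show "(matrix_inv (C x) *v y x) \<bullet> P x = (\<Sum>k\<in>UNIV. N k x / d x * P x $ k)" if "x \<in> space (lebesgue_on ?S)" for x
      using eqS that by simp
    show "(\<lambda>x. \<Sum>k\<in>UNIV. N k x / d x * P x $ k) \<in> borel_measurable (lebesgue_on ?S)"
      by measurable
  qed
  have "(\<lambda>x. (matrix_inv (C x) *v y x) \<bullet> P x) absolutely_integrable_on ?S"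
  proof (rule measurable_bounded_by_integrable_imp_absolutely_integrable[OF mb S])
    show "(\<lambda>x. norm (y x) / \<alpha> * norm (P x)) integrable_on ?S"
      by (intro integrable_continuous_interval continuous_intros y P) (use a in auto)
    show "norm ((matrix_inv (C x) *v y x) \<bullet> P x) \<le> norm (y x) / \<alpha> * norm (P x)" if x: "x \<in> ?S" for x
    proof -
      have "norm ((matrix_inv (C x) *v y x) \<bullet> P x) \<le> norm (matrix_inv (C x) *v y x) * norm (P x)"
        by (simp add: Cauchy_Schwarz_ineq2)
      also have "\<dots> \<le> norm (y x) / \<alpha> * norm (P x)"
        by (rule mult_right_mono) (use posdef_props(4)[OF a Cbd[OF x]] in auto)
      finally show ?thesis .
    qed
  qed
  then show ?thesis using set_lebesgue_integral_eq_integral(1) by blast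
qed





theorem lemma4p2:
  fixes N :: "'v set" and E :: "'e set" and ND :: "'v set"
    and pos :: "'v \<Rightarrow> vec3" and src trg :: "'e \<Rightarrow> 'v" and idx :: "'v \<Rightarrow> nat"
    and Cn Cm :: "'e \<Rightarrow> real \<Rightarrow> mat3" and \<alpha> \<beta> :: real
    and fE gE :: "'e \<Rightarrow> real \<Rightarrow> vec3" and fN gN uD rD :: "'v \<Rightarrow> vec3"
    and u r nn m nd md :: "'e \<Rightarrow> real \<Rightarrow> vec3" and uN rN :: "'v \<Rightarrow> vec3"
    and p :: nat and tau :: "'e \<Rightarrow> real"
    and uh rh nh mh :: "'e \<Rightarrow> real \<Rightarrow> vec3" and uhN rhN :: "'v \<Rightarrow> vec3"
    and Pu Pn Pr Pm :: "'e \<Rightarrow> real \<Rightarrow> vec3"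
  assumes
    \<comment> \<open>the network: finite connected graph embedded in R^3, edges oriented k < l\<close>
    finN: "finite N" and finE: "finite E"
    and ends: "\<And>e. e \<in> E \<Longrightarrow> src e \<in> N \<and> trg e \<in> N \<and> src e \<noteq> trg e"
    and simple: "inj_on (\<lambda>e. (src e, trg e)) E"
    and embed: "inj_on pos N"
    and idx_inj: "inj_on idx N" and orient: "\<And>e. e \<in> E \<Longrightarrow> idx (src e) < idx (trg e)"
    and conn: "\<And>a b. a \<in> N \<Longrightarrow> b \<in> N \<Longrightarrow>
        (a, b) \<in> ({(src e, trg e) | e. e \<in> E} \<union> {(trg e, src e) | e. e \<in> E})\<^sup>*"
    and ND: "ND \<subseteq> N" "ND \<noteq> {}"
    \<comment> \<open>material tensors\<close>
    and ab: "0 < \<alpha>" "0 < \<beta>"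
    and Cn_meas: "\<And>e. e \<in> E \<Longrightarrow> Cn e measurable_on {0..edge_len pos src trg e}"
    and Cm_meas: "\<And>e. e \<in> E \<Longrightarrow> Cm e measurable_on {0..edge_len pos src trg e}"
    and Cn_sym: "\<And>e x. e \<in> E \<Longrightarrow> x \<in> {0..edge_len pos src trg e} \<Longrightarrow> transpose (Cn e x) = Cn e x"
    and Cm_sym: "\<And>e x. e \<in> E \<Longrightarrow> x \<in> {0..edge_len pos src trg e} \<Longrightarrow> transpose (Cm e x) = Cm e x"
    and Cn_bd: "\<And>e x \<xi>. e \<in> E \<Longrightarrow> x \<in> {0..edge_len pos src trg e} \<Longrightarrow>
        \<alpha> * norm \<xi> ^ 2 \<le> (Cn e x *v \<xi>) \<bullet> \<xi> \<and> (Cn e x *v \<xi>) \<bullet> \<xi> \<le> \<beta> * norm \<xi> ^ 2"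
    and Cm_bd: "\<And>e x \<xi>. e \<in> E \<Longrightarrow> x \<in> {0..edge_len pos src trg e} \<Longrightarrow>
        \<alpha> * norm \<xi> ^ 2 \<le> (Cm e x *v \<xi>) \<bullet> \<xi> \<and> (Cm e x *v \<xi>) \<bullet> \<xi> \<le> \<beta> * norm \<xi> ^ 2"
    \<comment> \<open>data\<close>
    and fE_L2: "\<And>e. e \<in> E \<Longrightarrow> L2 (edge_len pos src trg e) (fE e)"
    and gE_L2: "\<And>e. e \<in> E \<Longrightarrow> L2 (edge_len pos src trg e) (gE e)"
    \<comment> \<open>exact solution\<close>
    and u_L2: "\<And>e. e \<in> E \<Longrightarrow> L2 (edge_len pos src trg e) (u e)"
    and r_L2: "\<And>e. e \<in> E \<Longrightarrow> L2 (edge_len pos src trg e) (r e)"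
    and n_H1: "\<And>e. e \<in> E \<Longrightarrow> wderiv (edge_len pos src trg e) (nn e) (nd e)"
    and m_H1: "\<And>e. e \<in> E \<Longrightarrow> wderiv (edge_len pos src trg e) (m e) (md e)"
    and ex_D: "\<And>a. a \<in> ND \<Longrightarrow> uN a = uD a \<and> rN a = rD a"
    and ex_n_jump: "\<And>a. a \<in> N - ND \<Longrightarrow>
        jump E src trg (edge_len pos src trg) (\<lambda>e x \<nu>. \<nu> *\<^sub>R nn e x) a = fN a"
    and ex_m_jump: "\<And>a. a \<in> N - ND \<Longrightarrow>
        jump E src trg (edge_len pos src trg) (\<lambda>e x \<nu>. \<nu> *\<^sub>R m e x) a = gN a"
    and ex_eq1: "\<And>e P Pd. e \<in> E \<Longrightarrow> wderiv (edge_len pos src trg e) P Pd \<Longrightarrow>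
        - ip (edge_len pos src trg e) (\<lambda>x. matrix_inv (Cn e x) *v nn e x) P
        + ip (edge_len pos src trg e) (u e) Pd
        - ip (edge_len pos src trg e) (\<lambda>x. cross3 (edge_dir pos src trg e) (r e x)) P
        = bdry src trg (edge_len pos src trg e) (\<lambda>a x \<nu>. uN a \<bullet> (\<nu> *\<^sub>R P x)) e"
    and ex_eq2: "\<And>e Q Qd. e \<in> E \<Longrightarrow> wderiv (edge_len pos src trg e) Q Qd \<Longrightarrow>
        - ip (edge_len pos src trg e) (\<lambda>x. matrix_inv (Cm e x) *v m e x) Q
        + ip (edge_len pos src trg e) (r e) Qd
        = bdry src trg (edge_len pos src trg e) (\<lambda>a x \<nu>. rN a \<bullet> (\<nu> *\<^sub>R Q x)) e"
    and ex_eq3: "\<And>e v. e \<in> E \<Longrightarrow> L2 (edge_len pos src trg e) v \<Longrightarrow>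
        ip (edge_len pos src trg e) (nd e) v = ip (edge_len pos src trg e) (fE e) v"
    and ex_eq4: "\<And>e w. e \<in> E \<Longrightarrow> L2 (edge_len pos src trg e) w \<Longrightarrow>
        ip (edge_len pos src trg e) (\<lambda>x. cross3 (edge_dir pos src trg e) (nn e x)) w
        + ip (edge_len pos src trg e) (md e) w = ip (edge_len pos src trg e) (gE e) w"
    \<comment> \<open>regularity of the exact solution stated in the setting\<close>
    and u_H1: "\<And>e. e \<in> E \<Longrightarrow> H1 (edge_len pos src trg e) (u e)
        \<and> u e 0 = uN (src e) \<and> u e (edge_len pos src trg e) = uN (trg e)"
    and r_H1: "\<And>e. e \<in> E \<Longrightarrow> H1 (edge_len pos src trg e) (r e)
        \<and> r e 0 = rN (src e) \<and> r e (edge_len pos src trg e) = rN (trg e)"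
    \<comment> \<open>HDG solution\<close>
    and tau_pos: "\<And>e. e \<in> E \<Longrightarrow> 0 < tau e"
    and hdg_poly: "\<And>e. e \<in> E \<Longrightarrow> polyvec p (uh e) \<and> polyvec p (rh e) \<and> polyvec p (nh e) \<and> polyvec p (mh e)"
    and hdg_D: "\<And>a. a \<in> ND \<Longrightarrow> uhN a = uD a \<and> rhN a = rD a"
    and hdg_n_jump: "\<And>a. a \<in> N - ND \<Longrightarrow>
        jump E src trg (edge_len pos src trg) (\<lambda>e x \<nu>. \<nu> *\<^sub>R nh e x + tau e *\<^sub>R (uh e x - uhN a)) a = fN a"
    and hdg_m_jump: "\<And>a. a \<in> N - ND \<Longrightarrow>
        jump E src trg (edge_len pos src trg) (\<lambda>e x \<nu>. \<nu> *\<^sub>R mh e x + tau e *\<^sub>R (rh e x - rhN a)) a = gN a"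
    and hdg_eq1: "\<And>e P. e \<in> E \<Longrightarrow> polyvec p P \<Longrightarrow>
        - ip (edge_len pos src trg e) (\<lambda>x. matrix_inv (Cn e x) *v nh e x) P
        + ip (edge_len pos src trg e) (uh e) (dx P)
        - ip (edge_len pos src trg e) (\<lambda>x. cross3 (edge_dir pos src trg e) (rh e x)) P
        = bdry src trg (edge_len pos src trg e) (\<lambda>a x \<nu>. uhN a \<bullet> (\<nu> *\<^sub>R P x)) e"
    and hdg_eq2: "\<And>e Q. e \<in> E \<Longrightarrow> polyvec p Q \<Longrightarrow>
        - ip (edge_len pos src trg e) (\<lambda>x. matrix_inv (Cm e x) *v mh e x) Q
        + ip (edge_len pos src trg e) (rh e) (dx Q)
        = bdry src trg (edge_len pos src trg e) (\<lambda>a x \<nu>. rhN a \<bullet> (\<nu> *\<^sub>R Q x)) e"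
    and hdg_eq3: "\<And>e v. e \<in> E \<Longrightarrow> polyvec p v \<Longrightarrow>
        ip (edge_len pos src trg e) (dx (nh e)) v
        + tau e * bdry src trg (edge_len pos src trg e) (\<lambda>a x \<nu>. uh e x \<bullet> v x) e
        = ip (edge_len pos src trg e) (fE e) v
        + tau e * bdry src trg (edge_len pos src trg e) (\<lambda>a x \<nu>. uhN a \<bullet> v x) e"
    and hdg_eq4: "\<And>e w. e \<in> E \<Longrightarrow> polyvec p w \<Longrightarrow>
        ip (edge_len pos src trg e) (\<lambda>x. cross3 (edge_dir pos src trg e) (nh e x)) w
        + ip (edge_len pos src trg e) (dx (mh e)) w
        + tau e * bdry src trg (edge_len pos src trg e) (\<lambda>a x \<nu>. rh e x \<bullet> w x) e
        = ip (edge_len pos src trg e) (gE e) w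
        + tau e * bdry src trg (edge_len pos src trg e) (\<lambda>a x \<nu>. rhN a \<bullet> w x) e"
    \<comment> \<open>projections Pi(u,n) = (Pu,Pn) and Pi(r,m) = (Pr,Pm)\<close>
    and proj_un: "\<And>e. e \<in> E \<Longrightarrow> is_proj p (tau e) (edge_len pos src trg e) (u e) (nn e) (Pu e) (Pn e)"
    and proj_rm: "\<And>e. e \<in> E \<Longrightarrow> is_proj p (tau e) (edge_len pos src trg e) (r e) (m e) (Pr e) (Pm e)"
  shows
    "(\<forall>e\<in>E. \<forall>P Q v w. polyvec p P \<longrightarrow> polyvec p Q \<longrightarrow> polyvec p v \<longrightarrow> polyvec p w \<longrightarrow>
      ip (edge_len pos src trg e) (\<lambda>x. Pu e x - uh e x) (dx P)
        = ip (edge_len pos src trg e) (\<lambda>x. matrix_inv (Cn e x) *v (nn e x - nh e x)) P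
        + ip (edge_len pos src trg e) (\<lambda>x. cross3 (edge_dir pos src trg e) (r e x - rh e x)) P
        + bdry src trg (edge_len pos src trg e) (\<lambda>a x \<nu>. (u e x - uhN a) \<bullet> (\<nu> *\<^sub>R P x)) e
      \<and> ip (edge_len pos src trg e) (\<lambda>x. Pr e x - rh e x) (dx Q)
        = ip (edge_len pos src trg e) (\<lambda>x. matrix_inv (Cm e x) *v (m e x - mh e x)) Q
        + bdry src trg (edge_len pos src trg e) (\<lambda>a x \<nu>. (r e x - rhN a) \<bullet> (\<nu> *\<^sub>R Q x)) e
      \<and> ip (edge_len pos src trg e) (dx (\<lambda>x. Pn e x - nh e x)) v
        = bdry src trg (edge_len pos src trg e)
            (\<lambda>a x \<nu>. (tau e *\<^sub>R (uh e x - uhN a) - \<nu> *\<^sub>R (nn e x - Pn e x)) \<bullet> v x) e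
      \<and> ip (edge_len pos src trg e) (dx (\<lambda>x. Pm e x - mh e x)) w
        = bdry src trg (edge_len pos src trg e)
            (\<lambda>a x \<nu>. (tau e *\<^sub>R (rh e x - rhN a) - \<nu> *\<^sub>R (m e x - Pm e x)) \<bullet> w x) e
          - ip (edge_len pos src trg e) (\<lambda>x. cross3 (edge_dir pos src trg e) (nn e x - nh e x)) w)
    \<and> (\<forall>a\<in>N - ND. \<forall>vN wN :: vec3.
      0 = jump E src trg (edge_len pos src trg)
            (\<lambda>e x \<nu>. \<nu> *\<^sub>R (Pn e x - nh e x) + tau e *\<^sub>R (Pu e x - uh e x)
                     - tau e *\<^sub>R (u e x - uhN a)) a \<bullet> vN
        + jump E src trg (edge_len pos src trg)
            (\<lambda>e x \<nu>. \<nu> *\<^sub>R (Pm e x - mh e x) + tau e *\<^sub>R (Pr e x - rh e x)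
                     - tau e *\<^sub>R (r e x - rhN a)) a \<bullet> wN)"
proof -
  have ip_diff_left: "ip h (\<lambda>x. a x - b x) c = ip h a c - ip h b c"
    if "(\<lambda>x. a x \<bullet> c x) integrable_on {0..h}" "(\<lambda>x. b x \<bullet> c x) integrable_on {0..h}"
    for h :: real and a b c :: "real \<Rightarrow> vec3"
    using that unfolding ip_def by (simp add: inner_diff_left integral_diff)
  have ip_cont: "(\<lambda>x. a x \<bullet> c x) integrable_on {0..h}"
    if "continuous_on {0..h} a" "continuous_on {0..h} c" for h :: real and a c :: "real \<Rightarrow> vec3"
    by (intro integrable_continuous_interval continuous_intros that)
  have H1c: "continuous_on {0..h} f" if "H1 h f" for h f
    using that wderiv_cont unfolding H1_def by blast
  have pc: "continuous_on {0..h} f" if "polyvec p f" for h f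
    using polyvec_deriv(4)[OF that] continuous_on_subset by blast
  have edge: "\<forall>P Q v w. polyvec p P \<longrightarrow> polyvec p Q \<longrightarrow> polyvec p v \<longrightarrow> polyvec p w \<longrightarrow>
      ip (edge_len pos src trg e) (\<lambda>x. Pu e x - uh e x) (dx P)
        = ip (edge_len pos src trg e) (\<lambda>x. matrix_inv (Cn e x) *v (nn e x - nh e x)) P
        + ip (edge_len pos src trg e) (\<lambda>x. cross3 (edge_dir pos src trg e) (r e x - rh e x)) P
        + bdry src trg (edge_len pos src trg e) (\<lambda>a x \<nu>. (u e x - uhN a) \<bullet> (\<nu> *\<^sub>R P x)) e
      \<and> ip (edge_len pos src trg e) (\<lambda>x. Pr e x - rh e x) (dx Q)
        = ip (edge_len pos src trg e) (\<lambda>x. matrix_inv (Cm e x) *v (m e x - mh e x)) Q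
        + bdry src trg (edge_len pos src trg e) (\<lambda>a x \<nu>. (r e x - rhN a) \<bullet> (\<nu> *\<^sub>R Q x)) e
      \<and> ip (edge_len pos src trg e) (dx (\<lambda>x. Pn e x - nh e x)) v
        = bdry src trg (edge_len pos src trg e)
            (\<lambda>a x \<nu>. (tau e *\<^sub>R (uh e x - uhN a) - \<nu> *\<^sub>R (nn e x - Pn e x)) \<bullet> v x) e
      \<and> ip (edge_len pos src trg e) (dx (\<lambda>x. Pm e x - mh e x)) w
        = bdry src trg (edge_len pos src trg e)
            (\<lambda>a x \<nu>. (tau e *\<^sub>R (rh e x - rhN a) - \<nu> *\<^sub>R (m e x - Pm e x)) \<bullet> w x) e
          - ip (edge_len pos src trg e) (\<lambda>x. cross3 (edge_dir pos src trg e) (nn e x - nh e x)) w"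
    if e: "e \<in> E" for e
  proof -
    define h where "h = edge_len pos src trg e"
    define ii where "ii = edge_dir pos src trg e"
    have h0: "0 \<le> h" by (simp add: h_def edge_len_def)
    have uc: "continuous_on {0..h} (u e)" and u0: "u e 0 = uN (src e)" and uh': "u e h = uN (trg e)"
      using u_H1[OF e] H1c unfolding h_def by blast+
    have rc: "continuous_on {0..h} (r e)" and r0: "r e 0 = rN (src e)" and rh': "r e h = rN (trg e)"
      using r_H1[OF e] H1c unfolding h_def by blast+
    have nw: "wderiv h (nn e) (nd e)" using n_H1[OF e] unfolding h_def .
    have mw: "wderiv h (m e) (md e)" using m_H1[OF e] unfolding h_def .
    have nc: "continuous_on {0..h} (nn e)" using wderiv_cont[OF nw] .
    have mc: "continuous_on {0..h} (m e)" using wderiv_cont[OF mw] .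
    have polys: "polyvec p (uh e)" "polyvec p (rh e)" "polyvec p (nh e)" "polyvec p (mh e)"
      using hdg_poly[OF e] by auto
    have pun: "is_proj p (tau e) h (u e) (nn e) (Pu e) (Pn e)" using proj_un[OF e] unfolding h_def .
    have prm: "is_proj p (tau e) h (r e) (m e) (Pr e) (Pm e)" using proj_rm[OF e] unfolding h_def .
    have ppolys: "polyvec p (Pu e)" "polyvec p (Pn e)" "polyvec p (Pr e)" "polyvec p (Pm e)"
      using pun prm unfolding is_proj_def by auto
    have projU: "ip h (Pu e) z = ip h (u e) z" "ip h (Pn e) z = ip h (nn e) z" if "polyvec_m1 p z" for z
      using pun that unfolding is_proj_def by auto
    have projR: "ip h (Pr e) z = ip h (r e) z" "ip h (Pm e) z = ip h (m e) z" if "polyvec_m1 p z" for z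
      using prm that unfolding is_proj_def by auto
    have A: "ip h (\<lambda>x. Pu e x - uh e x) (dx P)
        = ip h (\<lambda>x. matrix_inv (Cn e x) *v (nn e x - nh e x)) P
        + ip h (\<lambda>x. cross3 ii (r e x - rh e x)) P
        + bdry src trg h (\<lambda>a x \<nu>. (u e x - uhN a) \<bullet> (\<nu> *\<^sub>R P x)) e" if PP: "polyvec p P" for P
    proof -
      have Pw: "wderiv h P (dx P)" by (rule polyvec_wderiv[OF PP h0])
      have dPc: "continuous_on {0..h} (dx P)"
        using polyvec_deriv(3)[OF PP] continuous_on_subset by blast
      have Pc: "continuous_on {0..h} P" using pc[OF PP] .
      have E1: "- ip h (\<lambda>x. matrix_inv (Cn e x) *v nn e x) P + ip h (u e) (dx P)
          - ip h (\<lambda>x. cross3 ii (r e x)) P = uN (src e) \<bullet> ((-1) *\<^sub>R P 0) + uN (trg e) \<bullet> (1 *\<^sub>R P h)"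
        using ex_eq1[OF e, of P "dx P"] Pw unfolding h_def ii_def bdry_def by simp
      have H1: "- ip h (\<lambda>x. matrix_inv (Cn e x) *v nh e x) P + ip h (uh e) (dx P)
          - ip h (\<lambda>x. cross3 ii (rh e x)) P = uhN (src e) \<bullet> ((-1) *\<^sub>R P 0) + uhN (trg e) \<bullet> (1 *\<^sub>R P h)"
        using hdg_eq1[OF e PP] unfolding h_def ii_def bdry_def by simp
      have pr: "ip h (Pu e) (dx P) = ip h (u e) (dx P)"
        by (rule projU(1)[OF polyvec_deriv(2)[OF PP]])
      have L1: "ip h (\<lambda>x. Pu e x - uh e x) (dx P) = ip h (Pu e) (dx P) - ip h (uh e) (dx P)"
        by (intro ip_diff_left ip_cont pc ppolys polys dPc)
      have Cinv: "(\<lambda>x. (matrix_inv (Cn e x) *v y x) \<bullet> P x) integrable_on {0..h}"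
        if "continuous_on {0..h} y" for y
        by (rule inv_integrable[OF _ ab(1) _ that Pc])
           (use Cn_meas[OF e] Cn_bd[OF e] in \<open>auto simp: h_def\<close>)
      have L2: "ip h (\<lambda>x. matrix_inv (Cn e x) *v (nn e x - nh e x)) P
          = ip h (\<lambda>x. matrix_inv (Cn e x) *v nn e x) P - ip h (\<lambda>x. matrix_inv (Cn e x) *v nh e x) P"
        unfolding matrix_vector_mult_diff_distrib
        by (intro ip_diff_left Cinv nc pc polys)
      have L3: "ip h (\<lambda>x. cross3 ii (r e x - rh e x)) P
          = ip h (\<lambda>x. cross3 ii (r e x)) P - ip h (\<lambda>x. cross3 ii (rh e x)) P"
        unfolding Cross3.right_diff_distrib
        by (intro ip_diff_left ip_cont continuous_on_cross continuous_intros rc pc polys Pc)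
      show ?thesis
        unfolding L1 L2 L3 pr bdry_def using E1 H1 u0 uh'
        by (simp add: inner_diff_left)
    qed
    have B: "ip h (\<lambda>x. Pr e x - rh e x) (dx Q)
        = ip h (\<lambda>x. matrix_inv (Cm e x) *v (m e x - mh e x)) Q
        + bdry src trg h (\<lambda>a x \<nu>. (r e x - rhN a) \<bullet> (\<nu> *\<^sub>R Q x)) e" if QP: "polyvec p Q" for Q
    proof -
      have Qw: "wderiv h Q (dx Q)" by (rule polyvec_wderiv[OF QP h0])
      have dQc: "continuous_on {0..h} (dx Q)"
        using polyvec_deriv(3)[OF QP] continuous_on_subset by blast
      have Qc: "continuous_on {0..h} Q" using pc[OF QP] .
      have E2: "- ip h (\<lambda>x. matrix_inv (Cm e x) *v m e x) Q + ip h (r e) (dx Q)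
          = rN (src e) \<bullet> ((-1) *\<^sub>R Q 0) + rN (trg e) \<bullet> (1 *\<^sub>R Q h)"
        using ex_eq2[OF e, of Q "dx Q"] Qw unfolding h_def bdry_def by simp
      have H2: "- ip h (\<lambda>x. matrix_inv (Cm e x) *v mh e x) Q + ip h (rh e) (dx Q)
          = rhN (src e) \<bullet> ((-1) *\<^sub>R Q 0) + rhN (trg e) \<bullet> (1 *\<^sub>R Q h)"
        using hdg_eq2[OF e QP] unfolding h_def bdry_def by simp
      have pr: "ip h (Pr e) (dx Q) = ip h (r e) (dx Q)"
        by (rule projR(1)[OF polyvec_deriv(2)[OF QP]])
      have L1: "ip h (\<lambda>x. Pr e x - rh e x) (dx Q) = ip h (Pr e) (dx Q) - ip h (rh e) (dx Q)"
        by (intro ip_diff_left ip_cont pc ppolys polys dQc)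
      have Cinv: "(\<lambda>x. (matrix_inv (Cm e x) *v y x) \<bullet> Q x) integrable_on {0..h}"
        if "continuous_on {0..h} y" for y
        by (rule inv_integrable[OF _ ab(1) _ that Qc])
           (use Cm_meas[OF e] Cm_bd[OF e] in \<open>auto simp: h_def\<close>)
      have L2: "ip h (\<lambda>x. matrix_inv (Cm e x) *v (m e x - mh e x)) Q
          = ip h (\<lambda>x. matrix_inv (Cm e x) *v m e x) Q - ip h (\<lambda>x. matrix_inv (Cm e x) *v mh e x) Q"
        unfolding matrix_vector_mult_diff_distrib
        by (intro ip_diff_left Cinv mc pc polys)
      show ?thesis
        unfolding L1 L2 pr bdry_def using E2 H2 r0 rh'
        by (simp add: inner_diff_left)
    qed
    have dxdiff: "dx (\<lambda>x. f x - g x) = (\<lambda>x. dx f x - dx g x)" if "polyvec p f" "polyvec p g" for f g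
      unfolding dx_def
    proof (rule ext, rule vector_derivative_at)
      fix x
      show "((\<lambda>x. f x - g x) has_vector_derivative vector_derivative f (at x) - vector_derivative g (at x)) (at x)"
        using polyvec_deriv(1)[OF that(1), of x] polyvec_deriv(1)[OF that(2), of x]
        unfolding dx_def by (intro has_vector_derivative_diff)
    qed
    have C: "ip h (dx (\<lambda>x. Pn e x - nh e x)) v
        = bdry src trg h (\<lambda>a x \<nu>. (tau e *\<^sub>R (uh e x - uhN a) - \<nu> *\<^sub>R (nn e x - Pn e x)) \<bullet> v x) e"
      if vP: "polyvec p v" for v
    proof -
      have vc: "continuous_on {0..h} v" using pc[OF vP] .
      have ibpN: "ip h (nd e) v = nn e h \<bullet> v h - nn e 0 \<bullet> v 0 - ip h (nn e) (dx v)"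
        by (rule ibp_vec[OF h0 nw polyvec_deriv(1)[OF vP] polyvec_deriv(3)[OF vP]])
      have ibpP: "ip h (dx (Pn e)) v = Pn e h \<bullet> v h - Pn e 0 \<bullet> v 0 - ip h (Pn e) (dx v)"
        by (rule ibp_vec[OF h0 polyvec_wderiv[OF ppolys(2) h0] polyvec_deriv(1)[OF vP] polyvec_deriv(3)[OF vP]])
      have E3: "ip h (nd e) v = ip h (fE e) v"
        using ex_eq3[OF e, of v] cont_L2[OF vc] unfolding h_def by simp
      have H3: "ip h (dx (nh e)) v + tau e * (uh e 0 \<bullet> v 0 + uh e h \<bullet> v h)
          = ip h (fE e) v + tau e * (uhN (src e) \<bullet> v 0 + uhN (trg e) \<bullet> v h)"
        using hdg_eq3[OF e vP] unfolding h_def bdry_def by simp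
      have pr: "ip h (Pn e) (dx v) = ip h (nn e) (dx v)"
        by (rule projU(2)[OF polyvec_deriv(2)[OF vP]])
      have Ld: "ip h (\<lambda>x. dx (Pn e) x - dx (nh e) x) v = ip h (dx (Pn e)) v - ip h (dx (nh e)) v"
        by (intro ip_diff_left ip_cont vc continuous_on_subset[OF polyvec_deriv(3)[OF ppolys(2)]]
              continuous_on_subset[OF polyvec_deriv(3)[OF polys(3)]]) auto
      show ?thesis
        unfolding dxdiff[OF ppolys(2) polys(3)] Ld bdry_def
        using ibpN ibpP E3 H3 pr
        by (simp add: inner_diff_left algebra_simps)
    qed
    have D: "ip h (dx (\<lambda>x. Pm e x - mh e x)) w
        = bdry src trg h (\<lambda>a x \<nu>. (tau e *\<^sub>R (rh e x - rhN a) - \<nu> *\<^sub>R (m e x - Pm e x)) \<bullet> w x) e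
          - ip h (\<lambda>x. cross3 ii (nn e x - nh e x)) w"
      if wP: "polyvec p w" for w
    proof -
      have wc: "continuous_on {0..h} w" using pc[OF wP] .
      have ibpM: "ip h (md e) w = m e h \<bullet> w h - m e 0 \<bullet> w 0 - ip h (m e) (dx w)"
        by (rule ibp_vec[OF h0 mw polyvec_deriv(1)[OF wP] polyvec_deriv(3)[OF wP]])
      have ibpP: "ip h (dx (Pm e)) w = Pm e h \<bullet> w h - Pm e 0 \<bullet> w 0 - ip h (Pm e) (dx w)"
        by (rule ibp_vec[OF h0 polyvec_wderiv[OF ppolys(4) h0] polyvec_deriv(1)[OF wP] polyvec_deriv(3)[OF wP]])
      have E4: "ip h (\<lambda>x. cross3 ii (nn e x)) w + ip h (md e) w = ip h (gE e) w"
        using ex_eq4[OF e, of w] cont_L2[OF wc] unfolding h_def ii_def by simp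
      have H4: "ip h (\<lambda>x. cross3 ii (nh e x)) w + ip h (dx (mh e)) w + tau e * (rh e 0 \<bullet> w 0 + rh e h \<bullet> w h)
          = ip h (gE e) w + tau e * (rhN (src e) \<bullet> w 0 + rhN (trg e) \<bullet> w h)"
        using hdg_eq4[OF e wP] unfolding h_def ii_def bdry_def by simp
      have pr: "ip h (Pm e) (dx w) = ip h (m e) (dx w)"
        by (rule projR(2)[OF polyvec_deriv(2)[OF wP]])
      have Ld: "ip h (\<lambda>x. dx (Pm e) x - dx (mh e) x) w = ip h (dx (Pm e)) w - ip h (dx (mh e)) w"
        by (intro ip_diff_left ip_cont wc continuous_on_subset[OF polyvec_deriv(3)[OF ppolys(4)]]
              continuous_on_subset[OF polyvec_deriv(3)[OF polys(4)]]) auto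
      have Lc: "ip h (\<lambda>x. cross3 ii (nn e x - nh e x)) w
          = ip h (\<lambda>x. cross3 ii (nn e x)) w - ip h (\<lambda>x. cross3 ii (nh e x)) w"
        unfolding Cross3.right_diff_distrib
        by (intro ip_diff_left ip_cont continuous_on_cross continuous_intros nc pc polys wc)
      show ?thesis
        unfolding dxdiff[OF ppolys(4) polys(4)] Ld Lc bdry_def
        using ibpM ibpP E4 H4 pr
        by (simp add: inner_diff_left algebra_simps)
    qed
    show ?thesis
      unfolding h_def[symmetric] ii_def[symmetric]
      using A B C D by blast
  qed
  have jump_diff: "jump E src trg hf Q a = jump E src trg hf A a - jump E src trg hf B a"
    if "\<And>e. e \<in> E \<Longrightarrow> Q e 0 (-1) = A e 0 (-1) - B e 0 (-1)"
       "\<And>e. e \<in> E \<Longrightarrow> Q e (hf e) 1 = A e (hf e) 1 - B e (hf e) 1"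
    for hf Q A B a
  proof -
    have "(\<Sum>e\<in>{e\<in>E. src e = a}. Q e 0 (-1)) = (\<Sum>e\<in>{e\<in>E. src e = a}. A e 0 (-1) - B e 0 (-1))"
      using that(1) by (intro sum.cong) auto
    moreover have "(\<Sum>e\<in>{e\<in>E. trg e = a}. Q e (hf e) 1) = (\<Sum>e\<in>{e\<in>E. trg e = a}. A e (hf e) 1 - B e (hf e) 1)"
      using that(2) by (intro sum.cong) auto
    ultimately show ?thesis
      unfolding jump_def by (simp add: sum_subtractf algebra_simps)
  qed
  have node: "\<forall>a\<in>N - ND. \<forall>vN wN :: vec3.
      0 = jump E src trg (edge_len pos src trg)
            (\<lambda>e x \<nu>. \<nu> *\<^sub>R (Pn e x - nh e x) + tau e *\<^sub>R (Pu e x - uh e x)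
                     - tau e *\<^sub>R (u e x - uhN a)) a \<bullet> vN
        + jump E src trg (edge_len pos src trg)
            (\<lambda>e x \<nu>. \<nu> *\<^sub>R (Pm e x - mh e x) + tau e *\<^sub>R (Pr e x - rh e x)
                     - tau e *\<^sub>R (r e x - rhN a)) a \<bullet> wN"
  proof (intro ballI allI)
    fix a vN wN assume a: "a \<in> N - ND"
    have J1: "jump E src trg (edge_len pos src trg)
            (\<lambda>e x \<nu>. \<nu> *\<^sub>R (Pn e x - nh e x) + tau e *\<^sub>R (Pu e x - uh e x)
                     - tau e *\<^sub>R (u e x - uhN a)) a = 0"
    proof -
      have "jump E src trg (edge_len pos src trg)
            (\<lambda>e x \<nu>. \<nu> *\<^sub>R (Pn e x - nh e x) + tau e *\<^sub>R (Pu e x - uh e x)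
                     - tau e *\<^sub>R (u e x - uhN a)) a
          = jump E src trg (edge_len pos src trg) (\<lambda>e x \<nu>. \<nu> *\<^sub>R nn e x) a
          - jump E src trg (edge_len pos src trg) (\<lambda>e x \<nu>. \<nu> *\<^sub>R nh e x + tau e *\<^sub>R (uh e x - uhN a)) a"
      proof (rule jump_diff)
        fix e assume e: "e \<in> E"
        have b0: "(- Pn e 0) + tau e *\<^sub>R Pu e 0 = (- nn e 0) + tau e *\<^sub>R u e 0"
          and b1: "Pn e (edge_len pos src trg e) + tau e *\<^sub>R Pu e (edge_len pos src trg e)
             = nn e (edge_len pos src trg e) + tau e *\<^sub>R u e (edge_len pos src trg e)"
          using proj_un[OF e] unfolding is_proj_def by auto
        show "(-1) *\<^sub>R (Pn e 0 - nh e 0) + tau e *\<^sub>R (Pu e 0 - uh e 0) - tau e *\<^sub>R (u e 0 - uhN a)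
            = (-1) *\<^sub>R nn e 0 - ((-1) *\<^sub>R nh e 0 + tau e *\<^sub>R (uh e 0 - uhN a))"
          using b0 by (simp add: algebra_simps)
        show "1 *\<^sub>R (Pn e (edge_len pos src trg e) - nh e (edge_len pos src trg e))
            + tau e *\<^sub>R (Pu e (edge_len pos src trg e) - uh e (edge_len pos src trg e))
            - tau e *\<^sub>R (u e (edge_len pos src trg e) - uhN a)
            = 1 *\<^sub>R nn e (edge_len pos src trg e) - (1 *\<^sub>R nh e (edge_len pos src trg e)
               + tau e *\<^sub>R (uh e (edge_len pos src trg e) - uhN a))"
          using b1 by (simp add: algebra_simps)
      qed
      also have "\<dots> = 0" using ex_n_jump[OF a] hdg_n_jump[OF a] by simp
      finally show ?thesis .
    qed
    have J2: "jump E src trg (edge_len pos src trg)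
            (\<lambda>e x \<nu>. \<nu> *\<^sub>R (Pm e x - mh e x) + tau e *\<^sub>R (Pr e x - rh e x)
                     - tau e *\<^sub>R (r e x - rhN a)) a = 0"
    proof -
      have "jump E src trg (edge_len pos src trg)
            (\<lambda>e x \<nu>. \<nu> *\<^sub>R (Pm e x - mh e x) + tau e *\<^sub>R (Pr e x - rh e x)
                     - tau e *\<^sub>R (r e x - rhN a)) a
          = jump E src trg (edge_len pos src trg) (\<lambda>e x \<nu>. \<nu> *\<^sub>R m e x) a
          - jump E src trg (edge_len pos src trg) (\<lambda>e x \<nu>. \<nu> *\<^sub>R mh e x + tau e *\<^sub>R (rh e x - rhN a)) a"
      proof (rule jump_diff)
        fix e assume e: "e \<in> E"
        have b0: "(- Pm e 0) + tau e *\<^sub>R Pr e 0 = (- m e 0) + tau e *\<^sub>R r e 0"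
          and b1: "Pm e (edge_len pos src trg e) + tau e *\<^sub>R Pr e (edge_len pos src trg e)
             = m e (edge_len pos src trg e) + tau e *\<^sub>R r e (edge_len pos src trg e)"
          using proj_rm[OF e] unfolding is_proj_def by auto
        show "(-1) *\<^sub>R (Pm e 0 - mh e 0) + tau e *\<^sub>R (Pr e 0 - rh e 0) - tau e *\<^sub>R (r e 0 - rhN a)
            = (-1) *\<^sub>R m e 0 - ((-1) *\<^sub>R mh e 0 + tau e *\<^sub>R (rh e 0 - rhN a))"
          using b0 by (simp add: algebra_simps)
        show "1 *\<^sub>R (Pm e (edge_len pos src trg e) - mh e (edge_len pos src trg e))
            + tau e *\<^sub>R (Pr e (edge_len pos src trg e) - rh e (edge_len pos src trg e))
            - tau e *\<^sub>R (r e (edge_len pos src trg e) - rhN a)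
            = 1 *\<^sub>R m e (edge_len pos src trg e) - (1 *\<^sub>R mh e (edge_len pos src trg e)
               + tau e *\<^sub>R (rh e (edge_len pos src trg e) - rhN a))"
          using b1 by (simp add: algebra_simps)
      qed
      also have "\<dots> = 0" using ex_m_jump[OF a] hdg_m_jump[OF a] by simp
      finally show ?thesis .
    qed
    show "0 = jump E src trg (edge_len pos src trg)
            (\<lambda>e x \<nu>. \<nu> *\<^sub>R (Pn e x - nh e x) + tau e *\<^sub>R (Pu e x - uh e x)
                     - tau e *\<^sub>R (u e x - uhN a)) a \<bullet> vN
        + jump E src trg (edge_len pos src trg)
            (\<lambda>e x \<nu>. \<nu> *\<^sub>R (Pm e x - mh e x) + tau e *\<^sub>R (Pr e x - rh e x)
                     - tau e *\<^sub>R (r e x - rhN a)) a \<bullet> wN"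
      unfolding J1 J2 by simp
  qed
  show ?thesis using edge node by blast
qed


end
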